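(* Let $\mathcal{D}=(V,\Phi)$ be a finite directed graph with adjacency matrix $M\in\{0,1\}^{V\times V}$ ($M_{vw}=1$ iff $(v,w)\in\Phi$). Let $\boldsymbol{\alpha}(t),\boldsymbol{\beta}(t)\in[0,+\infty)^V$ ($t\ge0$) be vector sequences such that $\boldsymbol{\alpha}(t)$ is non-decreasing in every component and $\boldsymbol{\beta}(t)$ is convergent, and let $\mathbf{r},\mathbf{s}\in(0,+\infty)^V$ with $r_v=s_v^{-1}$ for all $v$. Set $W_{vw}=r_vM_{vw}s_w$. Define $\boldsymbol{\omega}(t),\boldsymbol{\eta}(t)$ by $\boldsymbol{\omega}(0)=\boldsymbol{\eta}(0)=\mathbf{1}$ and, for all $v\in V$, $t\ge0$, $$\omega_v(t+1)=\frac{1}{1+\alpha_v(t)+\sum_{w}W_{vw}(1-\omega_w(t))},\qquad \eta_v(t+1)=1+\beta_v(t)+\sum_w M_{vw}\,\omega_w(t)\,\eta_w(t).$$ If $\mathcal{D}$ is strongly connected and there exists $v\in V$ such that the sequence $\alpha_v(t)$ is not identically zero, then the sequences $\boldsymbol{\omega}(t)$ and $\boldsymbol{\eta}(t)$ converge. Moreover, for every $u\in V$ the sequence $\omega_u(t)$ is non-increasing and its limit satisfies $\omega_u(\infty)<1$.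
   Context: $\mathcal{D}$ is strongly connected if for every pair $v,w\in V$ there is a directed path from $v$ to $w$ and one from $w$ to $v$. *)

theory Defs
  imports Main "HOL-Analysis.Analysis"
begin

definition adj :: "('v \<times> 'v) set \<Rightarrow> 'v \<Rightarrow> 'v \<Rightarrow> real" where
  "adj Phi v w = (if (v, w) \<in> Phi then 1 else 0)"

definition strongly_connected :: "('v \<times> 'v) set \<Rightarrow> bool" where
  "strongly_connected Phi \<longleftrightarrow> (\<forall>v w. (v, w) \<in> Phi\<^sup>* \<and> (w, v) \<in> Phi\<^sup>*)"

fun omega :: "('v::finite \<Rightarrow> 'v \<Rightarrow> real) \<Rightarrow> (nat \<Rightarrow> 'v \<Rightarrow> real) \<Rightarrow> nat \<Rightarrow> 'v \<Rightarrow> real" where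
  "omega W \<alpha> 0 v = 1"
| "omega W \<alpha> (Suc t) v =
     1 / (1 + \<alpha> t v + (\<Sum>w\<in>UNIV. W v w * (1 - omega W \<alpha> t w)))"

fun eta :: "('v::finite \<Rightarrow> 'v \<Rightarrow> real) \<Rightarrow> (nat \<Rightarrow> 'v \<Rightarrow> real) \<Rightarrow> (nat \<Rightarrow> 'v \<Rightarrow> real)
            \<Rightarrow> nat \<Rightarrow> 'v \<Rightarrow> real" where
  "eta M \<beta> \<omega> 0 v = 1"
| "eta M \<beta> \<omega> (Suc t) v =
     1 + \<beta> t v + (\<Sum>w\<in>UNIV. M v w * \<omega> t w * eta M \<beta> \<omega> t w)"

end

theory Submission
  imports Defs
begin


locale L4 =
  fixes Phi :: "('v::finite \<times> 'v) set"
    and \<alpha> \<beta> :: "nat \<Rightarrow> 'v \<Rightarrow> real"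
    and r s :: "'v \<Rightarrow> real"
    and M W :: "'v \<Rightarrow> 'v \<Rightarrow> real"
  assumes alpha_nonneg: "\<forall>t v. \<alpha> t v \<ge> 0"
    and beta_nonneg: "\<forall>t v. \<beta> t v \<ge> 0"
    and alpha_mono: "\<forall>v. incseq (\<lambda>t. \<alpha> t v)"
    and beta_conv: "\<forall>v. convergent (\<lambda>t. \<beta> t v)"
    and r_pos: "\<forall>v. r v > 0" and s_pos: "\<forall>v. s v > 0"
    and rs: "\<forall>v. r v = inverse (s v)"
    and sc: "strongly_connected Phi"
    and alpha_nz: "\<exists>v t. \<alpha> t v \<noteq> 0"
    and M_def: "M = adj Phi"
    and W_def: "W = (\<lambda>v w. r v * adj Phi v w * s w)"
begin

abbreviation "\<omega> \<equiv> omega W \<alpha>"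

lemma W_nonneg: "W v w \<ge> 0"
  using r_pos[rule_format, of v] s_pos[rule_format, of w] by (auto simp: W_def adj_def)

lemma M01: "M v w = 0 \<or> M v w = 1"
  by (auto simp: M_def adj_def)

lemma om_bounds: "0 < \<omega> t v \<and> \<omega> t v \<le> 1"
proof (induction t arbitrary: v)
  case 0 then show ?case by simp
next
  case (Suc t)
  have "(\<Sum>w\<in>UNIV. W v w * (1 - \<omega> t w)) \<ge> 0"
    using Suc W_nonneg by (intro sum_nonneg) auto
  moreover have "\<alpha> t v \<ge> 0" using alpha_nonneg by auto
  ultimately show ?case by simp
qed

lemma om_dec: "\<omega> (Suc t) v \<le> \<omega> t v"
proof (induction t arbitrary: v)
  case 0 then show ?case using om_bounds[of "Suc 0" v] by simp
next
  case (Suc t)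
  have s1: "(\<Sum>w\<in>UNIV. W v w * (1 - \<omega> t w)) \<le> (\<Sum>w\<in>UNIV. W v w * (1 - \<omega> (Suc t) w))"
    using Suc W_nonneg by (intro sum_mono mult_left_mono) auto
  have s0: "(\<Sum>w\<in>UNIV. W v w * (1 - \<omega> t w)) \<ge> 0"
    using om_bounds W_nonneg by (intro sum_nonneg) auto
  have a1: "\<alpha> t v \<le> \<alpha> (Suc t) v" using alpha_mono by (auto simp: incseq_Suc_iff)
  have "\<alpha> t v \<ge> 0" using alpha_nonneg by auto
  then show ?case using s1 s0 a1
    by (simp only: omega.simps) (rule divide_left_mono; simp add: add_pos_nonneg)
qed

lemma om_decseq: "decseq (\<lambda>t. \<omega> t v)"
  by (rule decseq_SucI) (rule om_dec)

lemma M_nonneg: "M v w \<ge> 0" using M01[of v w] by auto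

lemma srv: "s v * r v = 1" using rs s_pos[rule_format, of v] by simp

definition z :: "nat \<Rightarrow> 'v \<Rightarrow> real" where "z t w = s w * (1 - \<omega> t w)"

lemma z_nonneg: "z t w \<ge> 0" using om_bounds[of t w] s_pos[rule_format, of w] by (auto simp: z_def)
lemma z_le_s: "z t w \<le> s w" using om_bounds[of t w] s_pos[rule_format, of w] by (auto simp: z_def)
lemma z_mono: "t \<le> t' \<Longrightarrow> z t w \<le> z t' w"
  using decseqD[OF om_decseq, of t t' w] s_pos[rule_format, of w] by (auto simp: z_def)

lemma om_ident:
  "\<omega> (Suc t) v * (\<Sum>w\<in>UNIV. M v w * z t w) = z (Suc t) v - s v * \<omega> (Suc t) v * \<alpha> t v"
proof -
  define P where "P = (\<Sum>w\<in>UNIV. M v w * z t w)"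
  have P0: "P \<ge> 0" unfolding P_def using M_nonneg z_nonneg by (intro sum_nonneg) auto
  have "(\<Sum>w\<in>UNIV. W v w * (1 - \<omega> t w)) = (\<Sum>w\<in>UNIV. r v * (M v w * z t w))"
    unfolding z_def by (rule sum.cong) (auto simp: W_def M_def)
  also have "\<dots> = r v * P" by (simp add: P_def sum_distrib_left)
  finally have eq: "(\<Sum>w\<in>UNIV. W v w * (1 - \<omega> t w)) = r v * P" .
  define D where "D = 1 + \<alpha> t v + r v * P"
  have D1: "D \<ge> 1" using alpha_nonneg r_pos[rule_format, of v] P0 by (simp add: D_def)
  have om: "\<omega> (Suc t) v = 1 / D" by (simp add: eq D_def)
  have zs: "z (Suc t) v = s v * (1 - 1 / D)" unfolding z_def om by simp
  have "1 / D * P = s v * (1 - 1 / D) - s v * (1 / D) * \<alpha> t v"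
  proof -
    have "s v * (1 - 1 / D) - s v * (1 / D) * \<alpha> t v = s v * (D - 1 - \<alpha> t v) / D"
      using D1 by (simp add: field_simps)
    also have "\<dots> = (s v * r v) * P / D" by (simp add: D_def)
    finally show ?thesis using srv[of v] by simp
  qed
  then show ?thesis unfolding P_def[symmetric] zs om by simp
qed

lemma exists_v0: "\<exists>v0 t0. \<alpha> t0 v0 > 0"
  using alpha_nz alpha_nonneg by (metis less_eq_real_def)

lemma exists_lt1:
  assumes "\<alpha> t0 v0 > 0"
  shows "\<exists>T. \<omega> T u < 1"
proof -
  have "(u, v0) \<in> Phi\<^sup>*" using sc by (auto simp: strongly_connected_def)
  then show ?thesis
  proof (induction rule: converse_rtrancl_induct)
    case base
    have "(\<Sum>w\<in>UNIV. W v0 w * (1 - \<omega> t0 w)) \<ge> 0"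
      using om_bounds W_nonneg by (intro sum_nonneg) auto
    then have "\<omega> (Suc t0) v0 < 1" using assms by simp
    then show ?case by blast
  next
    case (step u w)
    then obtain T where T: "\<omega> T w < 1" by blast
    have "W u w > 0" using step(1) r_pos s_pos by (simp add: W_def adj_def)
    then have "(\<Sum>x\<in>UNIV. W u x * (1 - \<omega> T x)) > 0"
      using om_bounds W_nonneg T by (intro sum_pos2[of UNIV w]) auto
    moreover have "\<alpha> T u \<ge> 0" using alpha_nonneg by auto
    ultimately have "\<omega> (Suc T) u < 1" by simp
    then show ?case by blast
  qed
qed

lemma om_conv: "(\<lambda>t. \<omega> t v) \<longlonglongrightarrow> lim (\<lambda>t. \<omega> t v)"
  using decseq_convergent[OF om_decseq, of 0 v] om_bounds
  by (metis convergent_LIMSEQ_iff convergent_def less_imp_le)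

lemma common_T0: "\<exists>T0. \<forall>u. \<omega> T0 u < 1"
proof -
  obtain v0 t0 where "\<alpha> t0 v0 > 0" using exists_v0 by blast
  then have "\<forall>u. \<exists>T. \<omega> T u < 1" using exists_lt1 by blast
  then obtain Tf where Tf: "\<And>u. \<omega> (Tf u) u < 1" by metis
  define T0 where "T0 = Max (range Tf)"
  have "\<omega> T0 u < 1" for u
  proof -
    have "Tf u \<le> T0" unfolding T0_def by (rule Max_ge) auto
    then have "\<omega> T0 u \<le> \<omega> (Tf u) u" using decseqD[OF om_decseq] by blast
    then show ?thesis using Tf[of u] by simp
  qed
  then show ?thesis by blast
qed

lemma lim_lt1: "lim (\<lambda>t. \<omega> t u) < 1"
proof -
  obtain T0 where "\<forall>u. \<omega> T0 u < 1" using common_T0 by blast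
  moreover have "lim (\<lambda>t. \<omega> t u) \<le> \<omega> T0 u" by (rule decseq_ge[OF om_decseq om_conv])
  ultimately show ?thesis by (meson le_less_trans)
qed

lemma sum_M_le:
  assumes "\<And>w. 0 \<le> f w" "\<And>w. f w \<le> B"
  shows "(\<Sum>w\<in>UNIV. M v w * f w) \<le> real (card (UNIV::'v set)) * B"
proof -
  have "(\<Sum>w\<in>UNIV. M v w * f w) \<le> (\<Sum>w\<in>(UNIV::'v set). B)"
  proof (rule sum_mono)
    fix w show "M v w * f w \<le> B" using M01[of v w] assms[of w] by auto
  qed
  then show ?thesis by simp
qed

lemma contraction:
  "\<exists>T \<gamma> \<epsilon> g ymin. 0 \<le> \<gamma> \<and> \<gamma> < 1 \<and> ymin > 0 \<and> \<epsilon> \<ge> 0 \<and> (\<forall>v. g v \<ge> 0)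
     \<and> (\<forall>t\<ge>T. \<forall>v. ymin \<le> z t v - \<epsilon> * g v)
     \<and> (\<forall>t\<ge>T. \<forall>v. \<omega> (Suc t) v * (\<Sum>w\<in>UNIV. M v w * (z t w - \<epsilon> * g w))
                        \<le> \<gamma> * (z (Suc t) v - \<epsilon> * g v))"
proof -
  obtain v0 t0 where a0: "\<alpha> t0 v0 > 0" using exists_v0 by blast
  define a where "a = \<alpha> t0 v0"
  obtain T0 where T0: "\<forall>u. \<omega> T0 u < 1" using common_T0 by blast
  define \<zeta>0 where "\<zeta>0 = Min (range (z T0))"
  have \<zeta>0pos: "\<zeta>0 > 0"
    unfolding \<zeta>0_def using T0 s_pos by (subst Min_gr_iff) (auto simp: z_def)
  have z_ge: "z t u \<ge> \<zeta>0" if "t \<ge> T0" for t u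
  proof -
    have "\<zeta>0 \<le> z T0 u" unfolding \<zeta>0_def by (rule Min_le) auto
    also have "\<dots> \<le> z t u" using z_mono that by blast
    finally show ?thesis .
  qed
  define T where "T = max T0 t0"
  define smax where "smax = Max (range s)"
  define smin where "smin = Min (range s)"
  have smax: "s u \<le> smax" for u unfolding smax_def by (rule Max_ge) auto
  have smin: "smin \<le> s u" for u unfolding smin_def by (rule Min_le) auto
  have sminpos: "smin > 0" unfolding smin_def using s_pos by (subst Min_gr_iff) auto
  have smaxpos: "smax > 0" using smax[of v0] s_pos by (meson less_le_trans)
  define n where "n = real (card (UNIV::'v set))"
  have n1: "n \<ge> 1" unfolding n_def
    using card_gt_0_iff[of "UNIV::'v set"] by (simp add: Suc_le_eq)
  have reach: "\<exists>k. (u, v0) \<in> Phi ^^ k" for u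
    using sc by (auto simp: strongly_connected_def rtrancl_power[symmetric])
  define d where "d u = (LEAST k. (u, v0) \<in> Phi ^^ k)" for u
  have d_in: "(u, v0) \<in> Phi ^^ d u" for u unfolding d_def using reach by (rule LeastI_ex)
  have d_le: "(u, v0) \<in> Phi ^^ k \<Longrightarrow> d u \<le> k" for u k unfolding d_def by (rule Least_le)
  define Dm where "Dm = Max (range d)"
  have dDm: "d u \<le> Dm" for u unfolding Dm_def by (rule Max_ge) auto
  define \<delta>0 where "\<delta>0 = \<zeta>0 / (4 * n * smax)"
  have \<delta>0pos: "\<delta>0 > 0" unfolding \<delta>0_def using \<zeta>0pos n1 smaxpos by simp
  define \<mu> where "\<mu> = min 1 (\<delta>0 / 2)"
  have \<mu>pos: "\<mu> > 0" and \<mu>1: "\<mu> \<le> 1" and \<mu>d: "\<mu> \<le> \<delta>0 / 2"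
    using \<delta>0pos by (auto simp: \<mu>_def)
  define g where "g u = \<mu> ^ d u" for u
  have g0: "g u \<ge> 0" and g1: "g u \<le> 1" for u
    using \<mu>pos \<mu>1 by (auto simp: g_def power_le_one)
  define \<epsilon> where "\<epsilon> = min (\<zeta>0 / 2) (smin * \<delta>0 * a / 2)"
  have \<epsilon>pos: "\<epsilon> > 0" unfolding \<epsilon>_def using \<zeta>0pos sminpos \<delta>0pos a0 by (simp add: a_def)
  define \<kappa> where "\<kappa> = min (1/2) (min (smin * \<delta>0 * a / (2 * smax)) (\<epsilon> * \<delta>0 * \<mu> ^ Dm / (2 * smax)))"
  have \<kappa>pos: "\<kappa> > 0" unfolding \<kappa>_def using sminpos \<delta>0pos a0 smaxpos \<epsilon>pos \<mu>pos
    by (simp add: a_def)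
  have \<kappa>half: "\<kappa> \<le> 1/2" unfolding \<kappa>_def by simp
  have \<kappa>1: "\<kappa> * smax \<le> smin * \<delta>0 * a / 2"
  proof -
    have "\<kappa> \<le> smin * \<delta>0 * a / (2 * smax)" unfolding \<kappa>_def by simp
    then show ?thesis using smaxpos by (simp add: field_simps)
  qed
  have \<kappa>2: "\<kappa> * smax \<le> \<epsilon> * \<delta>0 * \<mu> ^ Dm / 2"
  proof -
    have "\<kappa> \<le> \<epsilon> * \<delta>0 * \<mu> ^ Dm / (2 * smax)" unfolding \<kappa>_def by simp
    then show ?thesis using smaxpos by (simp add: field_simps)
  qed
  define \<gamma> where "\<gamma> = 1 - \<kappa>"
  define ymin where "ymin = \<zeta>0 / 2"
  have ymin_ok: "ymin \<le> z t u - \<epsilon> * g u" if "t \<ge> T" for t u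
  proof -
    have "\<epsilon> * g u \<le> \<epsilon> * 1" using g1 \<epsilon>pos by (intro mult_left_mono) auto
    moreover have "\<epsilon> \<le> \<zeta>0 / 2" unfolding \<epsilon>_def by simp
    moreover have "z t u \<ge> \<zeta>0" using z_ge that by (simp add: T_def)
    ultimately show ?thesis by (simp add: ymin_def)
  qed
  have main: "\<omega> (Suc t) v * (\<Sum>w\<in>UNIV. M v w * (z t w - \<epsilon> * g w)) \<le> \<gamma> * (z (Suc t) v - \<epsilon> * g v)"
    if tT: "t \<ge> T" for t v
  proof -
    define ov where "ov = \<omega> (Suc t) v"
    define Y where "Y = (\<Sum>w\<in>UNIV. M v w * (z t w - \<epsilon> * g w))"
    define Q where "Q = (\<Sum>w\<in>UNIV. M v w * g w)"
    define Pz where "Pz = (\<Sum>w\<in>UNIV. M v w * z t w)"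
    have YPQ: "Y = Pz - \<epsilon> * Q" unfolding Y_def Pz_def Q_def
      by (simp add: sum_subtractf sum_distrib_left algebra_simps)
    have ident: "ov * Pz = z (Suc t) v - s v * ov * \<alpha> t v"
      unfolding ov_def Pz_def by (rule om_ident)
    have o0: "ov > 0" and o1: "ov \<le> 1" using om_bounds[of "Suc t" v] unfolding ov_def by auto
    have Q0: "Q \<ge> 0" unfolding Q_def using M_nonneg g0 by (intro sum_nonneg) auto
    have yv: "z (Suc t) v - \<epsilon> * g v \<ge> ymin" using ymin_ok tT by simp
    have zle: "z (Suc t) v \<le> smax" using z_le_s[of "Suc t" v] smax[of v] by simp
    have \<alpha>0: "\<alpha> t v \<ge> 0" using alpha_nonneg by auto
    show ?thesis
    proof (cases "ov \<le> \<delta>0")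
      case True
      have Y0: "Y \<ge> 0" unfolding Y_def
      proof (intro sum_nonneg mult_nonneg_nonneg)
        fix w show "0 \<le> M v w" by (rule M_nonneg)
        show "0 \<le> z t w - \<epsilon> * g w" using ymin_ok[of t w] tT \<zeta>0pos by (simp add: ymin_def)
      qed
      have "Y \<le> n * smax" unfolding Y_def n_def
      proof (rule sum_M_le)
        fix w show "0 \<le> z t w - \<epsilon> * g w" using ymin_ok[of t w] tT \<zeta>0pos by (simp add: ymin_def)
        have "\<epsilon> * g w \<ge> 0" using \<epsilon>pos g0 by simp
        then show "z t w - \<epsilon> * g w \<le> smax" using z_le_s[of t w] smax[of w] by simp
      qed
      then have "ov * Y \<le> \<delta>0 * (n * smax)" using True Y0 o0 by (intro mult_mono) auto
      also have "\<dots> = \<zeta>0 / 4" unfolding \<delta>0_def using n1 smaxpos by simp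
      also have "\<dots> \<le> \<gamma> * ymin" unfolding \<gamma>_def ymin_def using \<kappa>half \<zeta>0pos by simp
      also have "\<dots> \<le> \<gamma> * (z (Suc t) v - \<epsilon> * g v)" using yv \<kappa>half
        by (intro mult_left_mono) (auto simp: \<gamma>_def)
      finally show ?thesis by (simp add: ov_def Y_def)
    next
      case False
      then have od: "ov > \<delta>0" by simp
      have eqY: "ov * Y = z (Suc t) v - s v * ov * \<alpha> t v - \<epsilon> * ov * Q"
        using ident by (simp add: YPQ algebra_simps)
      have kz: "\<kappa> * z (Suc t) v \<le> \<kappa> * smax" using zle \<kappa>pos by (intro mult_left_mono) auto
      have geg: "\<gamma> * \<epsilon> * g v \<le> \<epsilon> * g v" unfolding \<gamma>_def using \<kappa>pos \<epsilon>pos g0[of v]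
        by (simp add: mult_le_cancel_right1 algebra_simps)
      have goal: "\<kappa> * z (Suc t) v + \<gamma> * \<epsilon> * g v \<le> s v * ov * \<alpha> t v + \<epsilon> * ov * Q"
      proof (cases "v = v0")
        case True
        have at: "\<alpha> t v \<ge> a" unfolding a_def True
          using incseqD[OF alpha_mono[rule_format, of v0], of t0 t] tT by (simp add: T_def)
        have "smin * \<delta>0 * a \<le> s v * ov * \<alpha> t v"
          using smin[of v] sminpos \<delta>0pos od at a0 a_def
          by (intro mult_mono) (auto intro: mult_mono)
        moreover have "\<epsilon> * g v \<le> smin * \<delta>0 * a / 2"
          using g1[of v] \<epsilon>pos mult_left_mono[of "g v" 1 \<epsilon>] unfolding \<epsilon>_def by linarith
        moreover have "\<epsilon> * ov * Q \<ge> 0" using \<epsilon>pos o0 Q0 by simp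
        ultimately show ?thesis using kz \<kappa>1 geg by linarith
      next
        case False
        obtain k where dk: "d v = Suc k"
          using d_in[of v] False by (cases "d v") auto
        obtain w where vw: "(v, w) \<in> Phi" and wk: "(w, v0) \<in> Phi ^^ k"
          using relpow_Suc_D2[OF d_in[of v, unfolded dk]] by auto
        have dw: "d w \<le> k" using d_le[OF wk] .
        have gw: "g w \<ge> \<mu> ^ k" unfolding g_def using \<mu>pos \<mu>1 dw by (simp add: power_decreasing)
        have Mvw: "M v w = 1" using vw by (simp add: M_def adj_def)
        have "g w \<le> Q" unfolding Q_def
          using sum_nonneg_leq_bound[of UNIV "\<lambda>w. M v w * g w" Q w] M_nonneg g0 Mvw
          by (simp add: Q_def)
        then have Qk: "Q \<ge> \<mu> ^ k" using gw by simp
        have "\<epsilon> * \<delta>0 * \<mu> ^ k \<le> \<epsilon> * ov * Q"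
          using \<epsilon>pos \<delta>0pos \<mu>pos od Qk by (intro mult_mono) (auto intro: mult_mono)
        moreover have "\<epsilon> * g v \<le> \<epsilon> * \<delta>0 * \<mu> ^ k / 2"
        proof -
          have "g v = \<mu> * \<mu> ^ k" by (simp add: g_def dk)
          also have "\<dots> \<le> (\<delta>0 / 2) * \<mu> ^ k" using \<mu>d \<mu>pos by (intro mult_right_mono) auto
          finally show ?thesis using \<epsilon>pos by (simp add: mult_left_mono)
        qed
        moreover have "\<mu> ^ Dm \<le> \<mu> ^ k"
          using dDm[of v] dk \<mu>pos \<mu>1 by (intro power_decreasing) auto
        then have "\<epsilon> * \<delta>0 * \<mu> ^ Dm / 2 \<le> \<epsilon> * \<delta>0 * \<mu> ^ k / 2"
          using \<epsilon>pos \<delta>0pos by (simp add: mult_left_mono)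
        moreover have "s v * ov * \<alpha> t v \<ge> 0" using s_pos o0 \<alpha>0 by (simp add: less_imp_le)
        ultimately show ?thesis using kz \<kappa>2 geg by linarith
      qed
      have "ov * Y \<le> \<gamma> * (z (Suc t) v - \<epsilon> * g v)"
        using eqY goal by (simp add: \<gamma>_def algebra_simps)
      then show ?thesis by (simp add: ov_def Y_def)
    qed
  qed
  show ?thesis
    apply (rule exI[of _ T], rule exI[of _ \<gamma>], rule exI[of _ \<epsilon>], rule exI[of _ g], rule exI[of _ ymin])
    using \<kappa>pos \<kappa>half \<zeta>0pos \<epsilon>pos g0 ymin_ok main by (auto simp: \<gamma>_def ymin_def)
qed

end


lemma scalar_conv:
  fixes E \<Delta> :: "nat \<Rightarrow> real"
  assumes E0: "\<And>t. E t \<ge> 0" and rec: "\<And>t. E (Suc t) \<le> \<Delta> t + \<gamma> * E t"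
    and D: "\<Delta> \<longlonglongrightarrow> 0" and g0: "0 \<le> \<gamma>" and g1: "\<gamma> < 1"
  shows "E \<longlonglongrightarrow> 0"
proof (rule LIMSEQ_I)
  fix e :: real assume e: "e > 0"
  have "e * (1 - \<gamma>) / 2 > 0" using e g1 by simp
  from LIMSEQ_D[OF D this] obtain N where N0: "\<forall>t\<ge>N. norm (\<Delta> t - 0) < e * (1 - \<gamma>) / 2"
    by blast
  then have N: "\<And>t. t \<ge> N \<Longrightarrow> norm (\<Delta> t) < e * (1 - \<gamma>) / 2" by simp
  have bound: "E (N + k) \<le> e / 2 + \<gamma> ^ k * E N" for k
  proof (induction k)
    case 0 then show ?case using e by simp
  next
    case (Suc k)
    have "E (N + Suc k) \<le> \<Delta> (N + k) + \<gamma> * E (N + k)" using rec[of "N + k"] by simp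
    also have "\<dots> \<le> e * (1 - \<gamma>) / 2 + \<gamma> * (e / 2 + \<gamma> ^ k * E N)"
      using N[of "N + k"] Suc g0 by (intro add_mono mult_left_mono) auto
    also have "\<dots> = e / 2 + \<gamma> ^ Suc k * E N" by (simp add: field_simps)
    finally show ?case .
  qed
  have "(\<lambda>k. \<gamma> ^ k * E N) \<longlonglongrightarrow> 0 * E N"
    using g0 g1 by (intro tendsto_mult LIMSEQ_power_zero tendsto_const) auto
  then obtain K where K: "\<And>k. k \<ge> K \<Longrightarrow> norm (\<gamma> ^ k * E N) < e / 2"
    using LIMSEQ_D[of "\<lambda>k. \<gamma> ^ k * E N" 0 "e/2"] e by auto
  show "\<exists>no. \<forall>n\<ge>no. norm (E n - 0) < e"
  proof (intro exI allI impI)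
    fix n assume "n \<ge> N + K"
    define k where "k = n - N"
    have k: "n = N + k" "k \<ge> K" using \<open>n \<ge> N + K\<close> by (auto simp: k_def)
    have "E n \<le> e / 2 + \<gamma> ^ k * E N" using bound k by simp
    moreover have "\<gamma> ^ k * E N < e / 2" using K[OF k(2)] by simp
    ultimately show "norm (E n - 0) < e" using E0[of n] by simp
  qed
qed



context L4 begin

declare omega.simps(2)[simp del]

lemma eta_conv: "convergent (\<lambda>t. eta M \<beta> \<omega> t v)"
proof -
  obtain T \<gamma> \<epsilon> g ymin where g0: "0 \<le> \<gamma>" and g1: "\<gamma> < 1" and ymp: "ymin > 0" and ep: "\<epsilon> \<ge> 0"
    and gnn: "\<forall>v. g v \<ge> 0" and ymin: "\<forall>t\<ge>T. \<forall>v. ymin \<le> z t v - \<epsilon> * g v"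
    and ctr: "\<forall>t\<ge>T. \<forall>v. \<omega> (Suc t) v * (\<Sum>w\<in>UNIV. M v w * (z t w - \<epsilon> * g w))
                        \<le> \<gamma> * (z (Suc t) v - \<epsilon> * g v)"
    using contraction by blast
  define y where "y t v = z t v - \<epsilon> * g v" for t v
  define smax where "smax = Max (range s)"
  have smax: "s u \<le> smax" for u unfolding smax_def by (rule Max_ge) auto
  have y_le: "y t u \<le> smax" for t u
  proof -
    have "\<epsilon> * g u \<ge> 0" using ep gnn by simp
    then show ?thesis using z_le_s[of t u] smax[of u] by (simp add: y_def)
  qed
  have y_ge: "t \<ge> T \<Longrightarrow> y t u \<ge> ymin" for t u using ymin by (simp add: y_def)
  define \<eta> where "\<eta> = eta M \<beta> \<omega>"
  define \<zeta> where "\<zeta> t v = \<omega> t v * \<eta> t v" for t v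
  define c where "c t v = \<omega> (Suc t) v * (1 + \<beta> t v)" for t v
  define Bm where "Bm t v w = \<omega> (Suc t) v * M v w" for t v w
  have Bm0: "Bm t v w \<ge> 0" for t v w unfolding Bm_def using om_bounds[of "Suc t" v] M_nonneg[of v w] by simp
  have rec: "\<zeta> (Suc t) v = c t v + (\<Sum>w\<in>UNIV. Bm t v w * \<zeta> t w)" for t v
    by (simp add: \<zeta>_def \<eta>_def c_def Bm_def sum_distrib_left algebra_simps)
  have K: "(\<Sum>w\<in>UNIV. Bm t v w * y t w) \<le> \<gamma> * y (Suc t) v" if "t \<ge> T" for t v
  proof -
    have "(\<Sum>w\<in>UNIV. Bm t v w * y t w) = \<omega> (Suc t) v * (\<Sum>w\<in>UNIV. M v w * (z t w - \<epsilon> * g w))"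
      by (simp add: Bm_def y_def sum_distrib_left mult.assoc)
    then show ?thesis using ctr that by (simp add: y_def)
  qed
  define \<omega>L where "\<omega>L v = lim (\<lambda>t. \<omega> t v)" for v
  have \<omega>L: "(\<lambda>t. \<omega> (Suc t) v) \<longlonglongrightarrow> \<omega>L v" for v
    unfolding \<omega>L_def using om_conv by (rule LIMSEQ_Suc)
  have \<omega>Lle: "\<omega>L v \<le> \<omega> t v" for t v unfolding \<omega>L_def by (rule decseq_ge[OF om_decseq om_conv])
  have \<omega>L0: "\<omega>L v \<ge> 0" for v
    using om_conv[of v] om_bounds by (simp add: \<omega>L_def) (meson LIMSEQ_le_const less_imp_le)
  define \<beta>L where "\<beta>L v = lim (\<lambda>t. \<beta> t v)" for v
  have \<beta>L: "(\<lambda>t. \<beta> t v) \<longlonglongrightarrow> \<beta>L v" for v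
    unfolding \<beta>L_def using beta_conv by (simp add: convergent_LIMSEQ_iff)
  have \<beta>L0: "\<beta>L v \<ge> 0" for v
    using \<beta>L[of v] beta_nonneg by (meson LIMSEQ_le_const)
  define cL where "cL v = \<omega>L v * (1 + \<beta>L v)" for v
  define BL where "BL v w = \<omega>L v * M v w" for v w
  have cL0: "cL v \<ge> 0" for v using \<omega>L0 \<beta>L0 by (simp add: cL_def)
  have BL0: "BL v w \<ge> 0" for v w using \<omega>L0 M_nonneg by (simp add: BL_def)
  have BLle: "BL v w \<le> Bm t v w" for t v w
    using \<omega>Lle M_nonneg by (simp add: BL_def Bm_def mult_right_mono)
  have c_lim: "(\<lambda>t. c t v) \<longlonglongrightarrow> cL v" for v
    unfolding c_def cL_def by (intro tendsto_intros \<omega>L \<beta>L)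
  have B_lim: "(\<lambda>t. Bm t v w) \<longlonglongrightarrow> BL v w" for v w
    unfolding Bm_def BL_def by (intro tendsto_intros \<omega>L)
  define x where "x = rec_nat (\<lambda>v. 0) (\<lambda>k xk v. cL v + (\<Sum>w\<in>UNIV. BL v w * xk w))"
  have x0: "x 0 v = 0" for v by (simp add: x_def)
  have xS: "x (Suc k) v = cL v + (\<Sum>w\<in>UNIV. BL v w * x k w)" for k v by (simp add: x_def)
  have xmono: "x k v \<le> x (Suc k) v" for k v
  proof (induction k arbitrary: v)
    case 0 then show ?case using cL0 by (simp add: x0 xS)
  next
    case (Suc k)
    have "(\<Sum>w\<in>UNIV. BL v w * x k w) \<le> (\<Sum>w\<in>UNIV. BL v w * x (Suc k) w)"
      using Suc BL0 by (intro sum_mono mult_left_mono) auto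
    then show ?case by (simp only: xS[of "Suc k"] xS[of k])
  qed
  have xnn: "x k v \<ge> 0" for k v
  proof (induction k arbitrary: v)
    case 0 then show ?case by (simp add: x0)
  next
    case (Suc k) then show ?case using xmono[of k v] Suc[of v] by linarith
  qed
  define Lx where "Lx = (\<Sum>v\<in>UNIV. cL v) / ((1 - \<gamma>) * ymin)"
  have Lx0: "Lx \<ge> 0" unfolding Lx_def using cL0 g1 ymp by (intro divide_nonneg_pos sum_nonneg) auto
  have cLx: "cL v \<le> (1 - \<gamma>) * Lx * ymin" for v
  proof -
    have "cL v \<le> (\<Sum>v\<in>UNIV. cL v)" using cL0 by (intro member_le_sum) auto
    then show ?thesis unfolding Lx_def using g1 ymp by simp
  qed
  have xbound: "x k v \<le> Lx * y (T + k) v" for k v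
  proof (induction k arbitrary: v)
    case 0 then show ?case using Lx0 y_ge[of T v] ymp by (simp add: x0)
  next
    case (Suc k)
    have "(\<Sum>w\<in>UNIV. BL v w * x k w) \<le> (\<Sum>w\<in>UNIV. Bm (T + k) v w * (Lx * y (T + k) w))"
      using Suc BLle Bm0 xnn by (intro sum_mono mult_mono) auto
    also have "\<dots> = Lx * (\<Sum>w\<in>UNIV. Bm (T + k) v w * y (T + k) w)"
      by (simp add: sum_distrib_left algebra_simps)
    also have "\<dots> \<le> Lx * (\<gamma> * y (Suc (T + k)) v)" using K[of "T + k" v] Lx0
      by (intro mult_left_mono) auto
    finally have h: "(\<Sum>w\<in>UNIV. BL v w * x k w) \<le> Lx * (\<gamma> * y (T + Suc k) v)" by simp
    have yy: "ymin \<le> y (T + Suc k) v" using y_ge by simp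
    have "(1 - \<gamma>) * Lx * ymin \<le> (1 - \<gamma>) * Lx * y (T + Suc k) v"
      using yy g1 Lx0 by (intro mult_left_mono) auto
    then show ?case using h cLx[of v] by (simp add: xS algebra_simps)
  qed
  have "\<exists>L. (\<lambda>k. x k v) \<longlonglongrightarrow> L" for v
  proof -
    have "incseq (\<lambda>k. x k v)" using xmono by (intro incseq_SucI) auto
    moreover have "\<forall>k. x k v \<le> Lx * smax"
      using xbound y_le Lx0 by (meson mult_left_mono order_trans)
    ultimately show ?thesis by (metis incseq_convergent)
  qed
  then obtain xs where xs: "\<And>v. (\<lambda>k. x k v) \<longlonglongrightarrow> xs v" by metis
  have fp: "xs v = cL v + (\<Sum>w\<in>UNIV. BL v w * xs w)" for v
  proof -
    have "(\<lambda>k. x (Suc k) v) \<longlonglongrightarrow> xs v" using xs by (rule LIMSEQ_Suc)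
    moreover have "(\<lambda>k. x (Suc k) v) \<longlonglongrightarrow> cL v + (\<Sum>w\<in>UNIV. BL v w * xs w)"
      unfolding xS by (intro tendsto_intros xs)
    ultimately show ?thesis by (rule LIMSEQ_unique)
  qed
  define e where "e t v = \<zeta> (T + t) v - xs v" for t v
  define \<delta> where "\<delta> t v = \<bar>c (T + t) v - cL v\<bar> + \<bar>\<Sum>w\<in>UNIV. (Bm (T + t) v w - BL v w) * xs w\<bar>" for t v
  have \<delta>0: "\<delta> t v \<ge> 0" for t v by (simp add: \<delta>_def)
  have \<delta>lim: "(\<lambda>t. \<delta> t v) \<longlonglongrightarrow> 0" for v
  proof -
    have "(\<lambda>t. \<delta> t v) \<longlonglongrightarrow> \<bar>cL v - cL v\<bar> + \<bar>\<Sum>w\<in>UNIV. (BL v w - BL v w) * xs w\<bar>"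
      unfolding \<delta>_def
      by (intro tendsto_intros LIMSEQ_ignore_initial_segment[of _ _ T, unfolded add.commute[of _ T]]
             c_lim B_lim)
    then show ?thesis by simp
  qed
  have erec: "e (Suc t) v = (c (T + t) v - cL v) + (\<Sum>w\<in>UNIV. (Bm (T + t) v w - BL v w) * xs w)
       + (\<Sum>w\<in>UNIV. Bm (T + t) v w * e t w)" for t v
  proof -
    have "(\<Sum>w\<in>UNIV. Bm (T + t) v w * \<zeta> (T + t) w) - (\<Sum>w\<in>UNIV. BL v w * xs w)
        = (\<Sum>w\<in>UNIV. (Bm (T + t) v w - BL v w) * xs w + Bm (T + t) v w * e t w)"
      unfolding sum_subtractf[symmetric] by (rule sum.cong) (auto simp: e_def algebra_simps)
    also have "\<dots> = (\<Sum>w\<in>UNIV. (Bm (T + t) v w - BL v w) * xs w) + (\<Sum>w\<in>UNIV. Bm (T + t) v w * e t w)"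
      by (rule sum.distrib)
    finally show ?thesis unfolding e_def using rec[of "T + t" v] fp[of v] by simp
  qed
  define E where "E t = Max (range (\<lambda>v. \<bar>e t v\<bar> / y (T + t) v))" for t
  have ypos: "y (T + t) v > 0" for t v using y_ge[of "T + t" v] ymp by simp
  have eE: "\<bar>e t v\<bar> \<le> E t * y (T + t) v" for t v
  proof -
    have "\<bar>e t v\<bar> / y (T + t) v \<le> E t" unfolding E_def by (rule Max_ge) auto
    then show ?thesis using ypos[of t v] by (simp add: divide_le_eq)
  qed
  have E0: "E t \<ge> 0" for t
  proof -
    obtain v :: 'v where True by blast
    have "\<bar>e t v\<bar> / y (T + t) v \<le> E t" unfolding E_def by (rule Max_ge) auto
    moreover have "\<bar>e t v\<bar> / y (T + t) v \<ge> 0" using ypos[of t v] by simp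
    ultimately show ?thesis by linarith
  qed
  define \<Delta> where "\<Delta> t = (\<Sum>v\<in>UNIV. \<delta> t v) / ymin" for t
  have \<Delta>lim: "\<Delta> \<longlonglongrightarrow> 0"
  proof -
    have s0: "(\<lambda>t. \<Sum>v\<in>UNIV. \<delta> t v) \<longlonglongrightarrow> (\<Sum>v\<in>UNIV. (0::real))"
      using tendsto_sum[of UNIV "\<lambda>v t. \<delta> t v" "\<lambda>v. 0" sequentially] \<delta>lim by simp
    have "\<Delta> \<longlonglongrightarrow> (\<Sum>v\<in>UNIV. 0) / ymin" unfolding \<Delta>_def using ymp
      by (intro tendsto_divide s0 tendsto_const) auto
    then show ?thesis by simp
  qed
  have Erec: "E (Suc t) \<le> \<Delta> t + \<gamma> * E t" for t
    unfolding E_def[of "Suc t"]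
  proof (subst Max_le_iff, simp, simp, intro ballI, clarify)
    fix v
    have "\<bar>e (Suc t) v\<bar> \<le> \<delta> t v + (\<Sum>w\<in>UNIV. Bm (T + t) v w * \<bar>e t w\<bar>)"
    proof -
      have "\<bar>e (Suc t) v\<bar> \<le> \<bar>c (T + t) v - cL v\<bar> + \<bar>\<Sum>w\<in>UNIV. (Bm (T + t) v w - BL v w) * xs w\<bar>
              + \<bar>\<Sum>w\<in>UNIV. Bm (T + t) v w * e t w\<bar>"
        unfolding erec by (meson abs_triangle_ineq add_mono order_trans order_refl)
      also have "\<bar>\<Sum>w\<in>UNIV. Bm (T + t) v w * e t w\<bar> \<le> (\<Sum>w\<in>UNIV. Bm (T + t) v w * \<bar>e t w\<bar>)"
        using sum_abs[of "\<lambda>w. Bm (T + t) v w * e t w" UNIV] Bm0 by (simp add: abs_mult)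
      finally show ?thesis by (simp add: \<delta>_def)
    qed
    also have "(\<Sum>w\<in>UNIV. Bm (T + t) v w * \<bar>e t w\<bar>) \<le> (\<Sum>w\<in>UNIV. Bm (T + t) v w * (E t * y (T + t) w))"
      using eE Bm0 by (intro sum_mono mult_left_mono) auto
    also have "\<dots> = E t * (\<Sum>w\<in>UNIV. Bm (T + t) v w * y (T + t) w)"
      by (simp add: sum_distrib_left algebra_simps)
    also have "\<dots> \<le> E t * (\<gamma> * y (Suc (T + t)) v)" using K[of "T + t" v] E0[of t]
      by (intro mult_left_mono) auto
    finally have h: "\<bar>e (Suc t) v\<bar> \<le> \<delta> t v + \<gamma> * E t * y (T + Suc t) v" by (simp add: mult.assoc mult.left_commute)
    have yp: "y (T + Suc t) v \<ge> ymin" using y_ge by simp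
    have "\<bar>e (Suc t) v\<bar> / y (T + Suc t) v \<le> (\<delta> t v + \<gamma> * E t * y (T + Suc t) v) / y (T + Suc t) v"
      using h ypos[of "Suc t" v] by (intro divide_right_mono) auto
    also have "\<dots> = \<delta> t v / y (T + Suc t) v + \<gamma> * E t"
      using ypos[of "Suc t" v] by (simp add: add_divide_distrib)
    also have "\<delta> t v / y (T + Suc t) v \<le> \<delta> t v / ymin"
      using yp ymp \<delta>0 by (intro divide_left_mono) auto
    also have "\<delta> t v / ymin \<le> \<Delta> t" unfolding \<Delta>_def using ymp \<delta>0
      by (intro divide_right_mono member_le_sum) auto
    finally show "\<bar>e (Suc t) v\<bar> / y (T + Suc t) v \<le> \<Delta> t + \<gamma> * E t" by simp
  qed
  have Elim: "E \<longlonglongrightarrow> 0" by (rule scalar_conv[OF E0 Erec \<Delta>lim g0 g1])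
  have elim: "(\<lambda>t. e t v) \<longlonglongrightarrow> 0" for v
  proof (rule Lim_null_comparison)
    show "\<forall>\<^sub>F t in sequentially. norm (e t v) \<le> E t * smax"
    proof (rule always_eventually, rule allI)
      fix t show "norm (e t v) \<le> E t * smax"
        using order_trans[OF eE[of t v] mult_left_mono[OF y_le E0]] by simp
    qed
    show "(\<lambda>t. E t * smax) \<longlonglongrightarrow> 0" using tendsto_mult_left_zero[OF Elim] by simp
  qed
  have zlim: "(\<lambda>t. \<zeta> t w) \<longlonglongrightarrow> xs w" for w
  proof -
    have "(\<lambda>t. e t w + xs w) \<longlonglongrightarrow> 0 + xs w" by (intro tendsto_intros elim)
    then have "(\<lambda>t. \<zeta> (t + T) w) \<longlonglongrightarrow> xs w" by (simp add: e_def add.commute)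
    then show ?thesis by (rule LIMSEQ_offset)
  qed
  have "(\<lambda>t. \<eta> (Suc t) v) \<longlonglongrightarrow> 1 + \<beta>L v + (\<Sum>w\<in>UNIV. M v w * xs w)"
  proof -
    have "\<eta> (Suc t) v = 1 + \<beta> t v + (\<Sum>w\<in>UNIV. M v w * \<zeta> t w)" for t
      by (simp add: \<eta>_def \<zeta>_def mult.assoc)
    then show ?thesis by (simp only:) (intro tendsto_intros \<beta>L zlim)
  qed
  then have "convergent (\<lambda>t. \<eta> (Suc t) v)" by (auto simp: convergent_def)
  then show ?thesis unfolding \<eta>_def using convergent_Suc_iff[of "\<lambda>t. eta M \<beta> \<omega> t v"] by simp
qed

end

theorem lemma4:
  fixes Phi :: "('v::finite \<times> 'v) set"
    and \<alpha> \<beta> :: "nat \<Rightarrow> 'v \<Rightarrow> real"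
    and r s :: "'v \<Rightarrow> real"
  assumes alpha_nonneg: "\<forall>t v. \<alpha> t v \<ge> 0"
    and beta_nonneg: "\<forall>t v. \<beta> t v \<ge> 0"
    and alpha_mono: "\<forall>v. incseq (\<lambda>t. \<alpha> t v)"
    and beta_conv: "\<forall>v. convergent (\<lambda>t. \<beta> t v)"
    and r_pos: "\<forall>v. r v > 0" and s_pos: "\<forall>v. s v > 0"
    and rs: "\<forall>v. r v = inverse (s v)"
    and sc: "strongly_connected Phi"
    and alpha_nz: "\<exists>v t. \<alpha> t v \<noteq> 0"
  defines "M \<equiv> adj Phi"
    and "W \<equiv> (\<lambda>v w. r v * adj Phi v w * s w)"
  shows "(\<forall>v. convergent (\<lambda>t. omega W \<alpha> t v))
       \<and> (\<forall>v. convergent (\<lambda>t. eta M \<beta> (omega W \<alpha>) t v))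
       \<and> (\<forall>u. antimono (\<lambda>t. omega W \<alpha> t u))
       \<and> (\<forall>u. lim (\<lambda>t. omega W \<alpha> t u) < 1)"
proof -
  interpret L4 Phi \<alpha> \<beta> r s M W
    using assms by unfold_locales (simp_all add: M_def W_def)
  show ?thesis using om_conv eta_conv om_decseq lim_lt1 by (auto simp: convergent_def)
qed

end
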